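(* Fix integers $N\ge 2$ and $K\ge 1$. For every $r\ge 2$, $M^{\text{TransE}}$ does not subsume $M^{\text{RESCAL}}_r$, i.e. $\pi(\mathcal{M}^{\text{RESCAL}}_r)\not\subseteq\pi(\mathcal{M}^{\text{TransE}})$.
   Context: There are $N$ entities and $K$ relations. A score-based model assigns a score $s_k(i,j)\in\mathbb{R}$ to each triple, $i,j\in\{1,\dots,N\}$, $k\in\{1,\dots,K\}$; its scoring tensor $\mathcal{S}\in\mathbb{R}^{N\times N\times K}$ has frontal slices $\mathbf{S}_k$ with $[\mathbf{S}_k]_{ij}=s_k(i,j)$. For a real $N\times N$ matrix $\mathbf{S}$, $\pi(\mathbf{S})$ is the matrix of dense ranks: $\pi_{ij}(\mathbf{S})=1+$ (number of distinct values among entries of $\mathbf{S}$ strictly larger than $s_{ij}$). For tensors, $\pi$ acts slicewise; for a set $X$, $\pi(X)=\{\pi(x):x\in X\}$. RESCAL of size $r$: parameters $\mathbf{A}\in\mathbb{R}^{N\times r}$ (rows $\mathbf{a}_i$), $\mathbf{R}_1,\dots,\mathbf{R}_K\in\mathbb{R}^{r\times r}$, score $\mathbf{a}_i^T\mathbf{R}_k\mathbf{a}_j$. TransE of size $r$: parameters $\mathbf{A}\in\mathbb{R}^{N\times r}$, $\mathbf{R}\in\mathbb{R}^{K\times r}$ (rows $\mathbf{r}_k$), score $-\|\mathbf{a}_i+\mathbf{r}_k-\mathbf{a}_j\|_2^2$. $\mathcal{M}^t_r$ is the set of scoring tensors of all models of type $t$ and size $r$, and $\mathcal{M}^t=\bigcup_{r\in\mathbb{N}^+}\mathcal{M}^t_r$.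 A class $M^{t_2}$ subsumes $M^{t_1}$ if $\pi(\mathcal{M}^{t_1})\subseteq\pi(\mathcal{M}^{t_2})$. *)

theory Defs
  imports Main "HOL.Real"
begin

text \<open>Entities are indexed 1..N, relations 1..K, embedding coordinates 1..r.
  A scoring tensor is a function T with T i j k = s_k(i,j); only its values on
  {1..N} x {1..N} x {1..K} matter.\<close>

definition dense_rank :: "nat \<Rightarrow> (nat \<Rightarrow> nat \<Rightarrow> real) \<Rightarrow> nat \<Rightarrow> nat \<Rightarrow> nat" where
  "dense_rank N S i j =
     1 + card {v. (\<exists>a\<in>{1..N}. \<exists>b\<in>{1..N}. v = S a b) \<and> v > S i j}"

text \<open>Slicewise dense-rank tensor; set to 0 outside the index range so that
  equality of rank tensors only compares the relevant entries.\<close>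
definition pi_tensor :: "nat \<Rightarrow> nat \<Rightarrow> (nat \<Rightarrow> nat \<Rightarrow> nat \<Rightarrow> real) \<Rightarrow> (nat \<Rightarrow> nat \<Rightarrow> nat \<Rightarrow> nat)" where
  "pi_tensor N K T = (\<lambda>i j k.
     if i \<in> {1..N} \<and> j \<in> {1..N} \<and> k \<in> {1..K}
     then dense_rank N (\<lambda>a b. T a b k) i j else 0)"

definition rescal_tensors :: "nat \<Rightarrow> nat \<Rightarrow> nat \<Rightarrow> (nat \<Rightarrow> nat \<Rightarrow> nat \<Rightarrow> real) set" where
  "rescal_tensors N K r =
     {T. \<exists>(A::nat \<Rightarrow> nat \<Rightarrow> real) (R::nat \<Rightarrow> nat \<Rightarrow> nat \<Rightarrow> real).
        T = (\<lambda>i j k. \<Sum>l\<in>{1..r}. \<Sum>m\<in>{1..r}. A i l * R k l m * A j m)}"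

definition transe_tensors :: "nat \<Rightarrow> nat \<Rightarrow> nat \<Rightarrow> (nat \<Rightarrow> nat \<Rightarrow> nat \<Rightarrow> real) set" where
  "transe_tensors N K r =
     {T. \<exists>(A::nat \<Rightarrow> nat \<Rightarrow> real) (R::nat \<Rightarrow> nat \<Rightarrow> real).
        T = (\<lambda>i j k. - (\<Sum>l\<in>{1..r}. (A i l + R k l - A j l)\<^sup>2))}"

definition transe_all :: "nat \<Rightarrow> nat \<Rightarrow> (nat \<Rightarrow> nat \<Rightarrow> nat \<Rightarrow> real) set" where
  "transe_all N K = (\<Union>r\<in>{r. r \<ge> 1}. transe_tensors N K r)"

end

theory Submission
  imports Defs
begin

theorem theorem2:
  fixes N K r :: nat
  assumes "N \<ge> 2" and "K \<ge> 1" and "r \<ge> 2"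
  shows "\<not> (pi_tensor N K ` rescal_tensors N K r \<subseteq> pi_tensor N K ` transe_all N K)"
proof
  assume H: "pi_tensor N K ` rescal_tensors N K r \<subseteq> pi_tensor N K ` transe_all N K"
  define A :: "nat \<Rightarrow> nat \<Rightarrow> real" where "A = (\<lambda>i l. if i = 1 \<and> l = 1 then 1 else 0)"
  define R :: "nat \<Rightarrow> nat \<Rightarrow> nat \<Rightarrow> real" where "R = (\<lambda>k l m. if l = 1 \<and> m = 1 then 1 else 0)"
  define T :: "nat \<Rightarrow> nat \<Rightarrow> nat \<Rightarrow> real" where
    "T = (\<lambda>i j k. \<Sum>l\<in>{1..r}. \<Sum>m\<in>{1..r}. A i l * R k l m * A j m)"
  have T_eq: "T = (\<lambda>i j k. if i = 1 \<and> j = 1 then 1 else 0)"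
  proof (intro ext)
    fix i j k
    have "(\<Sum>l\<in>{1..r}. \<Sum>m\<in>{1..r}. A i l * R k l m * A j m)
        = (\<Sum>l\<in>{1..r}. (\<Sum>m\<in>{1..r}. if l = 1 then (if m = 1 then A i 1 * A j 1 else 0) else 0))"
    proof (rule sum.cong[OF refl], rule sum.cong[OF refl])
      fix l m
      show "A i l * R k l m * A j m = (if l = 1 then (if m = 1 then A i 1 * A j 1 else 0) else 0)"
        by (simp add: A_def R_def)
    qed
    also have "\<dots> = (\<Sum>l\<in>{1..r}. if l = 1 then A i 1 * A j 1 else 0)"
      using assms(3) by (intro sum.cong refl) simp
  also have "\<dots> = A i 1 * A j 1" using assms(3) by (simp add: sum.delta)
    finally show "T i j k = (if i = 1 \<and> j = 1 then 1 else 0)"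
      by (simp add: T_def A_def)
  qed
  have "T \<in> rescal_tensors N K r" unfolding rescal_tensors_def T_def by blast
  then obtain T' where T': "T' \<in> transe_all N K" "pi_tensor N K T = pi_tensor N K T'"
    using H by blast
  have "\<exists>r' (A'::nat \<Rightarrow> nat \<Rightarrow> real) (R'::nat \<Rightarrow> nat \<Rightarrow> real). T' = (\<lambda>i j k. - (\<Sum>l\<in>{1..r'}. (A' i l + R' k l - A' j l)\<^sup>2))"
    using T'(1) unfolding transe_all_def transe_tensors_def by blast
  then obtain r' :: nat and A' :: "nat \<Rightarrow> nat \<Rightarrow> real" and R' :: "nat \<Rightarrow> nat \<Rightarrow> real" where "T' = (\<lambda>i j k. - (\<Sum>l\<in>{1..r'}. (A' i l + R' k l - A' j l)\<^sup>2))"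
    by blast
  hence d: "T' 1 1 1 = T' 2 2 1" by simp
  have r1: "pi_tensor N K T' 1 1 1 = pi_tensor N K T' 2 2 1"
    using assms d by (simp add: pi_tensor_def dense_rank_def)
  have s1: "{v. (\<exists>a\<in>{1..N}. \<exists>b\<in>{1..N}. v = T a b 1) \<and> v > T 1 1 1} = {}"
    by (auto simp: T_eq)
  have s2: "{v. (\<exists>a\<in>{1..N}. \<exists>b\<in>{1..N}. v = T a b 1) \<and> v > T 2 2 1} = {1}"
  proof -
    have "(1::real) = T 1 1 1" by (simp add: T_eq)
    moreover have "(1::nat) \<in> {1..N}" using assms by simp
    ultimately have "1 \<in> {v. (\<exists>a\<in>{1..N}. \<exists>b\<in>{1..N}. v = T a b 1) \<and> v > T 2 2 1}"
      by (auto simp: T_eq)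
    thus ?thesis by (auto simp: T_eq)
  qed
  have "pi_tensor N K T 1 1 1 = 1" using assms s1 by (simp add: pi_tensor_def dense_rank_def)
  moreover have "pi_tensor N K T 2 2 1 = 2" using assms s2 by (simp add: pi_tensor_def dense_rank_def)
  ultimately show False using r1 T'(2) by simp
qed

end
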